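(* Let $K$ be an oriented Legendrian knot with a front diagram $D$ whose arcs $x_1,\dots,x_n$ (pieces of $D$ from one undercrossing to the next, possibly containing cusps), numbered consecutively along the orientation, give the presentation $\operatorname{GLR}(K)=\langle x_1,\dots,x_n\mid r_1,\dots,r_n\rangle$ with $r_i\colon u^{p_i}d^{q_i}(x_i)\ast^{\varepsilon_i}x_{k_i}=x_{i+1}$ ($x_{n+1}=x_1$). For $N\ge1$, let $S_+^NS_-^N(K)$ be represented by the diagram obtained from $D$ by performing $N$ positive and $N$ negative stabilizations on the arc $x_1$, so that $\operatorname{GLR}(S_+^NS_-^N(K))=\langle x_1,\dots,x_n\mid r_1',r_2,\dots,r_n\rangle$ with $r_1'\colon u^{2N+p_1}d^{2N+q_1}(x_1)\ast^{\varepsilon_1}x_{k_1}=x_2$. Let $(X,\ast,u,d)$ be a finite block GL-rack with diagonal map $\Delta=\alpha_1\cdots\alpha_l$, blocks $A_i=\operatorname{supp}(\alpha_i)$, induced GL-quandle $(\widetilde X=\{a_1,\dots,a_l\},\tilde\ast,\tilde u,\tilde d)$ and projection $\pi$. Then, identifying homomorphisms out of these presented GL-racks with their values on $x_1,\dots,x_n$, $\operatorname{Hom}(\operatorname{GLR}(K),\widetilde X)=\operatorname{Hom}(\operatorname{GLR}(S_+^NS_-^N(K)),\widetilde X)$; that is, for every $\psi\in\operatorname{Hom}(\operatorname{GLR}(K),\widetilde X)$ there is $\psi'\in\operatorname{Hom}(\operatorname{GLR}(S_+^NS_-^N(K)),\widetilde X)$ with $\psi'(x_i)=\psi(x_i)$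 for all $i$ (and conversely). Moreover, if $|\operatorname{Lift}(\psi)|\neq0$, then $|\operatorname{Lift}(\psi')|\neq0$ if and only if $\Delta^{2N}=\operatorname{id}_X$.
   Context: A rack is a set $X$ with a binary operation $\ast$ such that for every $y\in X$ the map $x\mapsto x\ast y$ is a bijection of $X$ (inverse written $x\mapsto x\ast^{-1}y$; $\ast^{+1}=\ast$) and $(x\ast y)\ast z=(x\ast z)\ast(y\ast z)$ for all $x,y,z$. A GL-rack is a quadruple $(X,\ast,u,d)$ where $(X,\ast)$ is a rack and $u,d\colon X\to X$ are maps such that for all $x,y\in X$: $u(d(x\ast x))=d(u(x\ast x))=x$; $u(x\ast y)=u(x)\ast y$ and $d(x\ast y)=d(x)\ast y$; $x\ast u(y)=x\ast d(y)=x\ast y$ (one has $ud=du$). A GL-quandle is a GL-rack with $x\ast x=x$. Homomorphisms preserve $\ast,u,d$. The diagonal map is $\Delta(x)=x\ast x$; for finite $X$ it is a bijection with $\Delta=(u\circ d)^{-1}$. A finite GL-rack is a block GL-rack if all cycles in the disjoint cycle decomposition $\Delta=\alpha_1\cdots\alpha_l$ (fixed points counted as $1$-cycles) have the same length; the blocks are $A_i=\operatorname{supp}(\alpha_i)$. The induced GL-quandle is $\widetilde X=\{a_1,\dots,a_l\}$ with $\pi\colon X\to\widetilde X$, $\pi(A_i)=\{a_i\}$, $a_i\tilde\ast a_j=\pi(A_i\ast A_j)$, $\tilde u(a_i)=\pi(u(A_i))$, $\tilde d(a_i)=\pi(d(A_i))$ (well defined). For $\psi$ a homomorphism from a fundamental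 GL-rack $G$ to $\widetilde X$, $\operatorname{Lift}(\psi)=\{\phi\in\operatorname{Hom}(G,X):\pi\circ\phi=\psi\}$. Legendrian knots lie in $(\mathbb{R}^3,\xi_{\mathrm{std}})$ and are represented by oriented front diagrams; positive/negative stabilization $S_\pm$ inserts a zigzag ($S_+$ adds two cusps traversed downward, $S_-$ two cusps traversed upward). The fundamental GL-rack $\operatorname{GLR}(K)$ is presented by the arcs of a front diagram with the relations $r_i$ above, where $p_i$ (resp. $q_i$) is the number of cusps traversed upward (resp. downward) on the arc $x_i$, $x_{k_i}$ is the over-arc at the undercrossing ending $x_i$, and $\varepsilon_i=\pm1$ its sign; this is a Legendrian isotopy invariant. *)

theory Defs
  imports Main
begin

definition rack :: "'a set \<Rightarrow> ('a \<Rightarrow> 'a \<Rightarrow> 'a) \<Rightarrow> bool" where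
  "rack X op \<longleftrightarrow>
     (\<forall>y\<in>X. bij_betw (\<lambda>x. op x y) X X) \<and>
     (\<forall>x\<in>X. \<forall>y\<in>X. \<forall>z\<in>X. op (op x y) z = op (op x z) (op y z))"

definition gl_rack :: "'a set \<Rightarrow> ('a \<Rightarrow> 'a \<Rightarrow> 'a) \<Rightarrow> ('a \<Rightarrow> 'a) \<Rightarrow> ('a \<Rightarrow> 'a) \<Rightarrow> bool" where
  "gl_rack X op u d \<longleftrightarrow> rack X op \<and> u ` X \<subseteq> X \<and> d ` X \<subseteq> X \<and>
     (\<forall>x\<in>X. u (d (op x x)) = x \<and> d (u (op x x)) = x) \<and>
     (\<forall>x\<in>X. \<forall>y\<in>X. u (op x y) = op (u x) y \<and> d (op x y) = op (d x) y) \<and>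
     (\<forall>x\<in>X. \<forall>y\<in>X. op x (u y) = op x y \<and> op x (d y) = op x y)"

definition rstar :: "'a set \<Rightarrow> ('a \<Rightarrow> 'a \<Rightarrow> 'a) \<Rightarrow> int \<Rightarrow> 'a \<Rightarrow> 'a \<Rightarrow> 'a" where
  "rstar X op e x y = (if e = 1 then op x y else the_inv_into X (\<lambda>z. op z y) x)"

definition diag :: "('a \<Rightarrow> 'a \<Rightarrow> 'a) \<Rightarrow> 'a \<Rightarrow> 'a" where
  "diag op x = op x x"

text \<open>The support of the cycle of \<open>\<Delta>\<close> containing \<open>x\<close> (the block of \<open>x\<close>; \<open>{x}\<close> for fixed points).\<close>
definition blk :: "('a \<Rightarrow> 'a \<Rightarrow> 'a) \<Rightarrow> 'a \<Rightarrow> 'a set" where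
  "blk op x = {(diag op ^^ j) x | j. True}"

definition block_gl_rack :: "'a set \<Rightarrow> ('a \<Rightarrow> 'a \<Rightarrow> 'a) \<Rightarrow> ('a \<Rightarrow> 'a) \<Rightarrow> ('a \<Rightarrow> 'a) \<Rightarrow> bool" where
  "block_gl_rack X op u d \<longleftrightarrow> finite X \<and> gl_rack X op u d \<and>
     (\<forall>x\<in>X. \<forall>y\<in>X. card (blk op x) = card (blk op y))"

text \<open>Induced GL-quandle: carrier = set of blocks, \<open>\<pi> = blk op\<close>.\<close>
definition ind_carrier :: "'a set \<Rightarrow> ('a \<Rightarrow> 'a \<Rightarrow> 'a) \<Rightarrow> 'a set set" where
  "ind_carrier X op = blk op ` X"

definition ind_op :: "('a \<Rightarrow> 'a \<Rightarrow> 'a) \<Rightarrow> 'a set \<Rightarrow> 'a set \<Rightarrow> 'a set" where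
  "ind_op op A B = the_elem ((\<lambda>(a, b). blk op (op a b)) ` (A \<times> B))"

definition ind_map :: "('a \<Rightarrow> 'a \<Rightarrow> 'a) \<Rightarrow> ('a \<Rightarrow> 'a) \<Rightarrow> 'a set \<Rightarrow> 'a set" where
  "ind_map op f A = the_elem (blk op ` f ` A)"

text \<open>Presentation data (0-indexed arcs \<open>x_0,\<dots>,x_{n-1}\<close>): relation \<open>r_i\<close> is
  \<open>u^{p i} d^{q i}(x_i) \<ast>^{eps i} x_{k i} = x_{(i+1) mod n}\<close>.
  A homomorphism to \<open>(Y,op,u,d)\<close> is identified with its list of values on the generators.\<close>
definition pres_hom ::
  "'b set \<Rightarrow> ('b \<Rightarrow> 'b \<Rightarrow> 'b) \<Rightarrow> ('b \<Rightarrow> 'b) \<Rightarrow> ('b \<Rightarrow> 'b) \<Rightarrow>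
   nat \<Rightarrow> (nat \<Rightarrow> nat) \<Rightarrow> (nat \<Rightarrow> nat) \<Rightarrow> (nat \<Rightarrow> int) \<Rightarrow> (nat \<Rightarrow> nat) \<Rightarrow> 'b list set" where
  "pres_hom Y op u d n p q eps k =
     {ys. length ys = n \<and> set ys \<subseteq> Y \<and>
          (\<forall>i<n. rstar Y op (eps i) ((u ^^ p i) ((d ^^ q i) (ys ! i))) (ys ! k i)
                 = ys ! ((i + 1) mod n))}"

definition lift_set ::
  "'a set \<Rightarrow> ('a \<Rightarrow> 'a \<Rightarrow> 'a) \<Rightarrow> ('a \<Rightarrow> 'a) \<Rightarrow> ('a \<Rightarrow> 'a) \<Rightarrow>
   nat \<Rightarrow> (nat \<Rightarrow> nat) \<Rightarrow> (nat \<Rightarrow> nat) \<Rightarrow> (nat \<Rightarrow> int) \<Rightarrow> (nat \<Rightarrow> nat) \<Rightarrow> 'a set list \<Rightarrow> 'a list set" where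
  "lift_set X op u d n p q eps k \<psi> =
     {\<phi> \<in> pres_hom X op u d n p q eps k. map (blk op) \<phi> = \<psi>}"

end

theory Submission
  imports Defs
begin
locale glr =
  fixes X :: "'a set" and op :: "'a \<Rightarrow> 'a \<Rightarrow> 'a" and u d :: "'a \<Rightarrow> 'a"
  assumes gl: "gl_rack X op u d" and fin: "finite X"
begin

abbreviation "D \<equiv> diag op"

lemma op_X: "x \<in> X \<Longrightarrow> y \<in> X \<Longrightarrow> op x y \<in> X"
  using gl unfolding gl_rack_def rack_def bij_betw_def by blast

lemma bij_op: "y \<in> X \<Longrightarrow> bij_betw (\<lambda>x. op x y) X X"
  using gl unfolding gl_rack_def rack_def by blast

lemma u_X: "x \<in> X \<Longrightarrow> u x \<in> X" and d_X: "x \<in> X \<Longrightarrow> d x \<in> X"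
  using gl unfolding gl_rack_def by blast+

lemma ud_D: "x \<in> X \<Longrightarrow> u (d (D x)) = x" and du_D: "x \<in> X \<Longrightarrow> d (u (D x)) = x"
  using gl unfolding gl_rack_def diag_def by blast+

lemma u_op: "x \<in> X \<Longrightarrow> y \<in> X \<Longrightarrow> u (op x y) = op (u x) y"
  and d_op: "x \<in> X \<Longrightarrow> y \<in> X \<Longrightarrow> d (op x y) = op (d x) y"
  and op_u: "x \<in> X \<Longrightarrow> y \<in> X \<Longrightarrow> op x (u y) = op x y"
  and op_d: "x \<in> X \<Longrightarrow> y \<in> X \<Longrightarrow> op x (d y) = op x y"
  using gl unfolding gl_rack_def by blast+

lemma dist: "x \<in> X \<Longrightarrow> y \<in> X \<Longrightarrow> z \<in> X \<Longrightarrow> op (op x y) z = op (op x z) (op y z)"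
  using gl unfolding gl_rack_def rack_def by blast

lemma D_X: "x \<in> X \<Longrightarrow> D x \<in> X"
  by (simp add: diag_def op_X)

lemma D_inj: "inj_on D X"
  by (metis ud_D inj_onI)

lemma D_surj: "x \<in> X \<Longrightarrow> \<exists>z\<in>X. x = D z"
proof -
  assume x: "x \<in> X"
  have "D ` X = X" using endo_inj_surj[OF fin _ D_inj] D_X by blast
  then show ?thesis using x by blast
qed

lemma ud_comm: "x \<in> X \<Longrightarrow> u (d x) = d (u x)"
  by (metis D_surj ud_D du_D)

lemma D_ud: "x \<in> X \<Longrightarrow> D (u (d x)) = x"
  by (metis D_surj ud_D)

lemma u_D: "x \<in> X \<Longrightarrow> u (D x) = D (u x)"
  by (simp add: diag_def u_op op_u u_X)

lemma d_D: "x \<in> X \<Longrightarrow> d (D x) = D (d x)"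
  by (simp add: diag_def d_op op_d d_X)

lemma D_op: "x \<in> X \<Longrightarrow> y \<in> X \<Longrightarrow> D (op x y) = op (D x) y"
  by (simp add: diag_def dist)

lemma op_D: "x \<in> X \<Longrightarrow> y \<in> X \<Longrightarrow> op x (D y) = op x y"
proof -
  assume x: "x \<in> X" and y: "y \<in> X"
  have "op x y = op x (u (d (D y)))" using ud_D y by simp
  also have "\<dots> = op x (d (D y))" using op_u x d_X D_X y by simp
  also have "\<dots> = op x (D y)" using op_d x D_X y by simp
  finally show ?thesis by simp
qed

lemma Dpow_X: "x \<in> X \<Longrightarrow> (D ^^ j) x \<in> X"
  by (induction j) (auto simp: D_X)

lemma upow_X: "x \<in> X \<Longrightarrow> (u ^^ j) x \<in> X"
  by (induction j) (auto simp: u_X)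

lemma dpow_X: "x \<in> X \<Longrightarrow> (d ^^ j) x \<in> X"
  by (induction j) (auto simp: d_X)

lemma op_Dpow: "x \<in> X \<Longrightarrow> y \<in> X \<Longrightarrow> op x ((D ^^ j) y) = op x y"
  by (induction j) (auto simp: op_D Dpow_X)

definition good :: "('a \<Rightarrow> 'a) \<Rightarrow> bool" where
  "good F \<longleftrightarrow> (\<forall>x\<in>X. F x \<in> X) \<and> (\<forall>x\<in>X. \<forall>y\<in>X. F (op x y) = op (F x) y)
     \<and> (\<forall>x\<in>X. F (u x) = u (F x)) \<and> (\<forall>x\<in>X. F (d x) = d (F x))"

lemma good_u: "good u"
  unfolding good_def by (auto simp: u_X u_op ud_comm)

lemma good_d: "good d"
  unfolding good_def by (auto simp: d_X d_op ud_comm)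

lemma good_D: "good D"
  unfolding good_def by (auto simp: D_X D_op u_D d_D)

lemma good_id: "good id"
  unfolding good_def by auto

lemma good_comp: "good F \<Longrightarrow> good G \<Longrightarrow> good (F \<circ> G)"
  unfolding good_def by (auto simp: u_X d_X)

lemma good_pow: "good F \<Longrightarrow> good (F ^^ j)"
  by (induction j) (auto simp: good_id good_comp)

lemma good_X: "good F \<Longrightarrow> x \<in> X \<Longrightarrow> F x \<in> X"
  unfolding good_def by blast

lemma good_u_comm: "good F \<Longrightarrow> x \<in> X \<Longrightarrow> F (u x) = u (F x)"
  unfolding good_def by blast

lemma good_d_comm: "good F \<Longrightarrow> x \<in> X \<Longrightarrow> F (d x) = d (F x)"
  unfolding good_def by blast

lemma good_upow: "good F \<Longrightarrow> x \<in> X \<Longrightarrow> F ((u ^^ a) x) = (u ^^ a) (F x)"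
  by (induction a) (auto simp: good_def upow_X)

lemma good_dpow: "good F \<Longrightarrow> x \<in> X \<Longrightarrow> F ((d ^^ a) x) = (d ^^ a) (F x)"
  by (induction a) (auto simp: good_def dpow_X)

lemma rstar_X: "x \<in> X \<Longrightarrow> y \<in> X \<Longrightarrow> rstar X op e x y \<in> X"
proof -
  assume x: "x \<in> X" and y: "y \<in> X"
  have b: "bij_betw (\<lambda>z. op z y) X X" using bij_op y .
  show ?thesis
    unfolding rstar_def using op_X x y b
    by (auto intro!: the_inv_into_into simp: bij_betw_def)
qed

lemma good_rstar: "good F \<Longrightarrow> x \<in> X \<Longrightarrow> y \<in> X \<Longrightarrow> F (rstar X op e x y) = rstar X op e (F x) y"
proof -
  assume g: "good F" and x: "x \<in> X" and y: "y \<in> X"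
  have b: "bij_betw (\<lambda>z. op z y) X X" using bij_op y .
  show ?thesis
  proof (cases "e = 1")
    case True then show ?thesis using g x y by (simp add: rstar_def good_def)
  next
    case False
    define r where "r = the_inv_into X (\<lambda>z. op z y) x"
    have r: "r \<in> X" unfolding r_def using b x
      by (auto intro!: the_inv_into_into simp: bij_betw_def)
    have r2: "op r y = x" unfolding r_def using b x f_the_inv_into_f_bij_betw[OF b] by auto
    have "op (F r) y = F x" using g r y r2 by (auto simp: good_def)
    then have "the_inv_into X (\<lambda>z. op z y) (F x) = F r"
      using b g r by (auto intro!: the_inv_into_f_eq simp: bij_betw_def good_def)
    then show ?thesis using False by (simp add: rstar_def r_def)
  qed
qed

lemma rstar_Dpow: "x \<in> X \<Longrightarrow> y \<in> X \<Longrightarrow> rstar X op e x ((D ^^ j) y) = rstar X op e x y"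
proof -
  assume x: "x \<in> X" and y: "y \<in> X"
  have "\<And>z. (z \<in> X \<and> op z ((D ^^ j) y) = x) = (z \<in> X \<and> op z y = x)"
    using op_Dpow y by auto
  then show ?thesis unfolding rstar_def the_inv_into_def using op_Dpow x y by simp
qed

lemma Dpow_cancel: "x \<in> X \<Longrightarrow> y \<in> X \<Longrightarrow> (D ^^ a) x = (D ^^ a) y \<Longrightarrow> x = y"
proof (induction a)
  case 0 then show ?case by simp
next
  case (Suc a)
  then have "(D ^^ a) x = (D ^^ a) y"
    using D_inj Dpow_X by (auto dest: inj_onD)
  then show ?case using Suc by blast
qed

lemma period_ex: "x \<in> X \<Longrightarrow> \<exists>P>0. (D ^^ P) x = x"
proof -
  assume x: "x \<in> X"
  have "\<not> inj_on (\<lambda>j. (D ^^ j) x) {..card X}"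
  proof
    assume i: "inj_on (\<lambda>j. (D ^^ j) x) {..card X}"
    have "card ((\<lambda>j. (D ^^ j) x) ` {..card X}) = card X + 1"
      using card_image[OF i] by simp
    moreover have "card ((\<lambda>j. (D ^^ j) x) ` {..card X}) \<le> card X"
      using Dpow_X x fin by (auto intro!: card_mono)
    ultimately show False by simp
  qed
  then obtain a b where ab: "a \<noteq> b" "(D ^^ a) x = (D ^^ b) x"
    unfolding inj_on_def by blast
  have "\<exists>a b. a < b \<and> (D ^^ a) x = (D ^^ b) x"
    using ab by (metis linorder_neqE_nat)
  then obtain a b where ab2: "a < b" "(D ^^ a) x = (D ^^ b) x" by blast
  have "(D ^^ b) x = (D ^^ a) ((D ^^ (b - a)) x)"
    using ab2(1) funpow_add[of a "b - a" D] by simp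
  then have "(D ^^ (b - a)) x = x"
    using Dpow_cancel[of "(D ^^ (b - a)) x" x a] ab2 x Dpow_X by simp
  then show ?thesis using ab2(1) by (intro exI[of _ "b - a"]) simp
qed

lemma Dpow_mult: "(D ^^ P) x = x \<Longrightarrow> (D ^^ (P * m)) x = x"
  by (induction m) (simp_all add: funpow_add)

lemma in_blk: "x \<in> blk op x"
  unfolding blk_def by (auto intro: exI[of _ 0])

lemma blk_Dpow: "x \<in> X \<Longrightarrow> blk op ((D ^^ j) x) = blk op x"
proof -
  assume x: "x \<in> X"
  obtain P where P: "P > 0" "(D ^^ P) x = x" using period_ex x by blast
  show ?thesis
  proof
    show "blk op ((D ^^ j) x) \<subseteq> blk op x"
    proof
      fix y assume "y \<in> blk op ((D ^^ j) x)"
      then obtain i where y: "y = (D ^^ i) ((D ^^ j) x)" unfolding blk_def by blast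
      then have "y = (D ^^ (i + j)) x" by (simp add: funpow_add)
      then show "y \<in> blk op x" unfolding blk_def by blast
    qed
  next
    show "blk op x \<subseteq> blk op ((D ^^ j) x)"
    proof
      fix y assume "y \<in> blk op x"
      then obtain i where y: "y = (D ^^ i) x" unfolding blk_def by blast
      have "(D ^^ (i + P * j - j)) ((D ^^ j) x) = (D ^^ (i + P * j)) x"
        using P(1) funpow_add[of "i + P * j - j" j D]
        by (simp add: le_add2 order_trans[OF _ le_add2] )
      also have "\<dots> = (D ^^ i) ((D ^^ (P * j)) x)" by (simp add: funpow_add)
      also have "\<dots> = y" using Dpow_mult[OF P(2)] y by simp
      finally show "y \<in> blk op ((D ^^ j) x)" unfolding blk_def by blast
    qed
  qed
qed

definition per :: "'a \<Rightarrow> nat" where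
  "per x = (LEAST P. 0 < P \<and> (D ^^ P) x = x)"

lemma per: "x \<in> X \<Longrightarrow> 0 < per x \<and> (D ^^ per x) x = x"
  unfolding per_def using period_ex by (rule LeastI_ex)

lemma per_le: "0 < P \<Longrightarrow> (D ^^ P) x = x \<Longrightarrow> per x \<le> P"
  unfolding per_def by (rule Least_le) simp

lemma Dpow_mod: "x \<in> X \<Longrightarrow> (D ^^ i) x = (D ^^ (i mod per x)) x"
proof -
  assume x: "x \<in> X"
  have "(D ^^ i) x = (D ^^ (i mod per x + per x * (i div per x))) x" by simp
  also have "\<dots> = (D ^^ (i mod per x)) ((D ^^ (per x * (i div per x))) x)"
    by (simp only: funpow_add o_apply)
  also have "\<dots> = (D ^^ (i mod per x)) x" using Dpow_mult per x by simp
  finally show ?thesis .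
qed

lemma per_dvd: "x \<in> X \<Longrightarrow> (D ^^ k) x = x \<Longrightarrow> per x dvd k"
proof (rule ccontr)
  assume x: "x \<in> X" and k: "(D ^^ k) x = x" and nd: "\<not> per x dvd k"
  have m: "0 < k mod per x" using nd by (simp add: dvd_eq_mod_eq_0)
  have "(D ^^ (k mod per x)) x = x" using Dpow_mod[OF x, of k] k by simp
  then have "per x \<le> k mod per x" using per_le m by blast
  moreover have "k mod per x < per x" using per x by simp
  ultimately show False by simp
qed

lemma card_blk: "x \<in> X \<Longrightarrow> card (blk op x) = per x"
proof -
  assume x: "x \<in> X"
  have eq: "blk op x = (\<lambda>j. (D ^^ j) x) ` {..<per x}"
  proof
    show "blk op x \<subseteq> (\<lambda>j. (D ^^ j) x) ` {..<per x}"
    proof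
      fix y assume "y \<in> blk op x"
      then obtain i where y: "y = (D ^^ i) x" unfolding blk_def by blast
      then have "y = (D ^^ (i mod per x)) x" using Dpow_mod[OF x, of i] by simp
      moreover have "i mod per x < per x" using per x by simp
      ultimately show "y \<in> (\<lambda>j. (D ^^ j) x) ` {..<per x}" by blast
    qed
  next
    show "(\<lambda>j. (D ^^ j) x) ` {..<per x} \<subseteq> blk op x" unfolding blk_def by blast
  qed
  have inj: "inj_on (\<lambda>j. (D ^^ j) x) {..<per x}"
  proof (rule ccontr)
    assume "\<not> inj_on (\<lambda>j. (D ^^ j) x) {..<per x}"
    then obtain a b where ab: "a < per x" "b < per x" "a \<noteq> b" "(D ^^ a) x = (D ^^ b) x"
      unfolding inj_on_def by auto
    then have "\<exists>a b. a < b \<and> b < per x \<and> (D ^^ a) x = (D ^^ b) x"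
      by (metis linorder_neqE_nat)
    then obtain a b where ab2: "a < b" "b < per x" "(D ^^ a) x = (D ^^ b) x" by blast
    have "(D ^^ b) x = (D ^^ a) ((D ^^ (b - a)) x)"
      using ab2(1) funpow_add[of a "b - a" D] by simp
    then have "(D ^^ (b - a)) x = x"
      using Dpow_cancel[of "(D ^^ (b - a)) x" x a] ab2 x Dpow_X by simp
    then have "per x \<le> b - a" using per_le ab2(1) by simp
    then show False using ab2 by simp
  qed
  show ?thesis using eq card_image[OF inj] by simp
qed

lemma udpow_D: "x \<in> X \<Longrightarrow> (D ^^ n) ((u ^^ n) ((d ^^ n) x)) = x"
proof (induction n arbitrary: x)
  case 0 then show ?case by simp
next
  case (Suc n)
  have "(u ^^ Suc n) ((d ^^ Suc n) x) = (u ^^ n) (u ((d ^^ n) (d x)))"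
    by (simp add: funpow_Suc_right del: funpow.simps)
  also have "\<dots> = (u ^^ n) ((d ^^ n) (u (d x)))"
    using good_dpow[OF good_u, of "d x" n] Suc.prems d_X by simp
  finally have "(D ^^ Suc n) ((u ^^ Suc n) ((d ^^ Suc n) x))
     = D ((D ^^ n) ((u ^^ n) ((d ^^ n) (u (d x)))))" by simp
  also have "\<dots> = x" using Suc u_X d_X D_ud by simp
  finally show ?case .
qed

lemma ind_map_u: "x \<in> X \<Longrightarrow> ind_map op u (blk op x) = blk op (u x)"
proof -
  assume x: "x \<in> X"
  have "blk op ` u ` blk op x = {blk op (u x)}"
  proof
    show "blk op ` u ` blk op x \<subseteq> {blk op (u x)}"
    proof
      fix B assume "B \<in> blk op ` u ` blk op x"
      then obtain i where "B = blk op (u ((D ^^ i) x))" unfolding blk_def by blast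
      also have "\<dots> = blk op ((D ^^ i) (u x))"
        using good_u_comm[OF good_pow[OF good_D], of x i] x by simp
      also have "\<dots> = blk op (u x)" using blk_Dpow u_X x by simp
      finally show "B \<in> {blk op (u x)}" by simp
    qed
  next
    show "{blk op (u x)} \<subseteq> blk op ` u ` blk op x" using in_blk by blast
  qed
  then show ?thesis unfolding ind_map_def by simp
qed

lemma ind_map_d: "x \<in> X \<Longrightarrow> ind_map op d (blk op x) = blk op (d x)"
proof -
  assume x: "x \<in> X"
  have "blk op ` d ` blk op x = {blk op (d x)}"
  proof
    show "blk op ` d ` blk op x \<subseteq> {blk op (d x)}"
    proof
      fix B assume "B \<in> blk op ` d ` blk op x"
      then obtain i where "B = blk op (d ((D ^^ i) x))" unfolding blk_def by blast
      also have "\<dots> = blk op ((D ^^ i) (d x))"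
        using good_d_comm[OF good_pow[OF good_D], of x i] x by simp
      also have "\<dots> = blk op (d x)" using blk_Dpow d_X x by simp
      finally show "B \<in> {blk op (d x)}" by simp
    qed
  next
    show "{blk op (d x)} \<subseteq> blk op ` d ` blk op x" using in_blk by blast
  qed
  then show ?thesis unfolding ind_map_def by simp
qed

lemma ind_map_upow: "x \<in> X \<Longrightarrow> (ind_map op u ^^ a) (blk op x) = blk op ((u ^^ a) x)"
  by (induction a) (auto simp: ind_map_u upow_X)

lemma ind_map_dpow: "x \<in> X \<Longrightarrow> (ind_map op d ^^ a) (blk op x) = blk op ((d ^^ a) x)"
  by (induction a) (auto simp: ind_map_d dpow_X)

end
lemma pres_hom_cong:
  assumes n: "n \<ge> 1"
    and h0: "\<forall>y\<in>Y. (u ^^ p' 0) ((d ^^ q' 0) y) = (u ^^ p 0) ((d ^^ q 0) y)"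
    and hi: "\<forall>i. i \<noteq> 0 \<longrightarrow> p' i = p i \<and> q' i = q i"
  shows "pres_hom Y op u d n p q eps k = pres_hom Y op u d n p' q' eps k"
proof -
  have key: "(u ^^ p' i) ((d ^^ q' i) (ys ! i)) = (u ^^ p i) ((d ^^ q i) (ys ! i))"
    if "length ys = n" "set ys \<subseteq> Y" "i < n" for ys i
  proof (cases "i = 0")
    case True
    then have "ys ! i \<in> Y" using that n by (metis nth_mem subsetD)
    then show ?thesis using h0 True by simp
  next
    case False then show ?thesis using hi by simp
  qed
  show ?thesis unfolding pres_hom_def
  proof (intro Collect_cong conj_cong refl)
    fix ys assume "length ys = n" "set ys \<subseteq> Y"
    then show "(\<forall>i<n. rstar Y op (eps i) ((u ^^ p i) ((d ^^ q i) (ys ! i))) (ys ! k i) = ys ! ((i + 1) mod n)) =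
       (\<forall>i<n. rstar Y op (eps i) ((u ^^ p' i) ((d ^^ q' i) (ys ! i))) (ys ! k i) = ys ! ((i + 1) mod n))"
      using key by simp
  qed
qed

theorem lemma4p3:
  fixes X :: "'a set" and op :: "'a \<Rightarrow> 'a \<Rightarrow> 'a" and u d :: "'a \<Rightarrow> 'a"
    and n N :: nat and p q k :: "nat \<Rightarrow> nat" and eps :: "nat \<Rightarrow> int"
  assumes blockX: "block_gl_rack X op u d"
    and n_pos: "n \<ge> 1" and N_pos: "N \<ge> 1"
    and k_range: "\<forall>i<n. k i < n"
    and eps_range: "\<forall>i<n. eps i = 1 \<or> eps i = -1"
  defines "p' \<equiv> p(0 := 2 * N + p 0)" and "q' \<equiv> q(0 := 2 * N + q 0)"
    and "Xt \<equiv> ind_carrier X op" and "opt \<equiv> ind_op op"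
    and "ut \<equiv> ind_map op u" and "dt \<equiv> ind_map op d"
  shows "pres_hom Xt opt ut dt n p q eps k = pres_hom Xt opt ut dt n p' q' eps k
    \<and> (\<forall>\<psi> \<in> pres_hom Xt opt ut dt n p q eps k.
         card (lift_set X op u d n p q eps k \<psi>) \<noteq> 0 \<longrightarrow>
         (card (lift_set X op u d n p' q' eps k \<psi>) \<noteq> 0 \<longleftrightarrow>
          (\<forall>x\<in>X. (diag op ^^ (2 * N)) x = x)))"
proof -
  interpret glr X op u d using blockX by unfold_locales (simp_all add: block_gl_rack_def)
  define H where "H = (u ^^ (2 * N)) \<circ> (d ^^ (2 * N))"
  have goodH: "good H" unfolding H_def by (intro good_comp good_pow good_u good_d)
  have HX: "x \<in> X \<Longrightarrow> H x \<in> X" for x using good_X[OF goodH] .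
  have DH: "x \<in> X \<Longrightarrow> (D ^^ (2 * N)) (H x) = x" for x
    unfolding H_def using udpow_D by simp
  have Hrel: "(u ^^ (2 * N + a)) ((d ^^ (2 * N + b)) x) = H ((u ^^ a) ((d ^^ b) x))"
    if x: "x \<in> X" for x a b
  proof -
    have "(u ^^ (2 * N + a)) ((d ^^ (2 * N + b)) x)
        = (u ^^ (2 * N)) ((u ^^ a) ((d ^^ (2 * N)) ((d ^^ b) x)))"
      by (simp add: funpow_add)
    also have "(u ^^ a) ((d ^^ (2 * N)) ((d ^^ b) x)) = (d ^^ (2 * N)) ((u ^^ a) ((d ^^ b) x))"
      using good_upow[OF good_pow[OF good_d, of "2 * N"] dpow_X[OF x, of b], where a=a] by simp
    finally show ?thesis unfolding H_def by simp
  qed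
  have p'0: "p' 0 = 2 * N + p 0" and q'0: "q' 0 = 2 * N + q 0"
    unfolding p'_def q'_def by simp_all
  have pqi: "\<forall>i. i \<noteq> 0 \<longrightarrow> p' i = p i \<and> q' i = q i" unfolding p'_def q'_def by simp
  have blkH: "x \<in> X \<Longrightarrow> blk op (H x) = blk op x" for x
    using blk_Dpow[OF HX, of x "2 * N"] DH by simp
  have part1: "pres_hom Xt opt ut dt n p q eps k = pres_hom Xt opt ut dt n p' q' eps k"
  proof (rule pres_hom_cong[OF n_pos _ pqi])
    show "\<forall>y\<in>Xt. (ut ^^ p' 0) ((dt ^^ q' 0) y) = (ut ^^ p 0) ((dt ^^ q 0) y)"
    proof
      fix y assume "y \<in> Xt"
      then obtain x where x: "x \<in> X" and y: "y = blk op x"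
        unfolding Xt_def ind_carrier_def by blast
      have "(ut ^^ p' 0) ((dt ^^ q' 0) y) = blk op ((u ^^ p' 0) ((d ^^ q' 0) x))"
        unfolding ut_def dt_def y using ind_map_dpow[OF x] ind_map_upow dpow_X[OF x] by simp
      also have "\<dots> = blk op ((u ^^ p 0) ((d ^^ q 0) x))"
        unfolding p'0 q'0 Hrel[OF x] using blkH upow_X dpow_X x by simp
      also have "\<dots> = (ut ^^ p 0) ((dt ^^ q 0) y)"
        unfolding ut_def dt_def y using ind_map_dpow[OF x] ind_map_upow dpow_X[OF x] by simp
      finally show "(ut ^^ p' 0) ((dt ^^ q' 0) y) = (ut ^^ p 0) ((dt ^^ q 0) y)" .
    qed
  qed
  have part2: "card (lift_set X op u d n p' q' eps k \<psi>) \<noteq> 0 \<longleftrightarrow> (\<forall>x\<in>X. (D ^^ (2 * N)) x = x)"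
    if L: "card (lift_set X op u d n p q eps k \<psi>) \<noteq> 0" for \<psi>
  proof
    assume all: "\<forall>x\<in>X. (D ^^ (2 * N)) x = x"
    have "pres_hom X op u d n p q eps k = pres_hom X op u d n p' q' eps k"
    proof (rule pres_hom_cong[OF n_pos _ pqi])
      show "\<forall>y\<in>X. (u ^^ p' 0) ((d ^^ q' 0) y) = (u ^^ p 0) ((d ^^ q 0) y)"
      proof
        fix y assume y: "y \<in> X"
        have w: "(u ^^ p 0) ((d ^^ q 0) y) \<in> X" using upow_X dpow_X y by simp
        show "(u ^^ p' 0) ((d ^^ q' 0) y) = (u ^^ p 0) ((d ^^ q 0) y)"
          unfolding p'0 q'0 Hrel[OF y] using all DH[OF w] HX[OF w] by metis
      qed
    qed
    then show "card (lift_set X op u d n p' q' eps k \<psi>) \<noteq> 0"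
      using L unfolding lift_set_def by simp
  next
    assume L': "card (lift_set X op u d n p' q' eps k \<psi>) \<noteq> 0"
    obtain \<phi> where \<phi>: "\<phi> \<in> pres_hom X op u d n p q eps k" "map (blk op) \<phi> = \<psi>"
      proof -
      have "lift_set X op u d n p q eps k \<psi> \<noteq> {}" using L by (metis card.empty)
      then show ?thesis using that unfolding lift_set_def by blast
    qed
    obtain \<phi>' where \<phi>': "\<phi>' \<in> pres_hom X op u d n p' q' eps k" "map (blk op) \<phi>' = \<psi>"
      proof -
      have "lift_set X op u d n p' q' eps k \<psi> \<noteq> {}" using L' by (metis card.empty)
      then show ?thesis using that unfolding lift_set_def by blast
    qed
    have len: "length \<phi> = n" "length \<phi>' = n" and setX: "set \<phi> \<subseteq> X" "set \<phi>' \<subseteq> X"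
      using \<phi>(1) \<phi>'(1) unfolding pres_hom_def by auto
    have inX: "i < n \<Longrightarrow> \<phi> ! i \<in> X" "i < n \<Longrightarrow> \<phi>' ! i \<in> X" for i
      using len setX by (metis nth_mem subsetD)+
    have blkeq: "i < n \<Longrightarrow> blk op (\<phi>' ! i) = blk op (\<phi> ! i)" for i
      using \<phi>(2) \<phi>'(2) len by (metis nth_map)
    have inblk: "i < n \<Longrightarrow> \<exists>j. \<phi>' ! i = (D ^^ j) (\<phi> ! i)" for i
      using in_blk[of "\<phi>' ! i"] blkeq[of i] unfolding blk_def by auto
    obtain j where j: "\<phi>' ! 0 = (D ^^ j) (\<phi> ! 0)" using inblk n_pos by auto
    define S where "S i x = rstar X op (eps i) ((u ^^ p i) ((d ^^ q i) x)) (\<phi> ! (k i))" for i x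
    have Scomm: "S i (F x) = F (S i x)" if "good F" "i < n" "x \<in> X" for F i x
    proof -
      have w: "(u ^^ p i) ((d ^^ q i) x) \<in> X" using upow_X dpow_X that(3) by simp
      have "(u ^^ p i) ((d ^^ q i) (F x)) = F ((u ^^ p i) ((d ^^ q i) x))"
        using good_upow[OF that(1)] good_dpow[OF that(1)] dpow_X that(3) by simp
      then show ?thesis unfolding S_def
        using good_rstar[OF that(1) w inX(1)[of "k i"]] k_range that(2) by simp
    qed
    have relphi: "i < n \<Longrightarrow> \<phi> ! ((i + 1) mod n) = S i (\<phi> ! i)" for i
      using \<phi>(1) unfolding pres_hom_def S_def by auto
    have rot: "rstar X op e w (\<phi>' ! (k i)) = rstar X op e w (\<phi> ! (k i))"
      if ih: "i < n" and wX: "w \<in> X" for e w i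
    proof -
      obtain j' where "\<phi>' ! (k i) = (D ^^ j') (\<phi> ! (k i))" using inblk k_range ih by blast
      then show ?thesis using rstar_Dpow[OF wX inX(1)] k_range ih by simp
    qed
    have relphi': "\<phi>' ! ((i + 1) mod n) = S i (\<phi>' ! i)" if "1 \<le> i" "i < n" for i
    proof -
      have "\<phi>' ! ((i + 1) mod n) = rstar X op (eps i) ((u ^^ p' i) ((d ^^ q' i) (\<phi>' ! i))) (\<phi>' ! k i)"
        using \<phi>'(1) that unfolding pres_hom_def by auto
      also have "\<dots> = rstar X op (eps i) ((u ^^ p i) ((d ^^ q i) (\<phi>' ! i))) (\<phi>' ! k i)"
        using pqi that by simp
      also have "\<dots> = S i (\<phi>' ! i)" unfolding S_def
        using rot that upow_X dpow_X inX by simp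
      finally show ?thesis .
    qed
    have relphi'0: "\<phi>' ! (1 mod n) = H (S 0 (\<phi>' ! 0))"
    proof -
      have x0: "\<phi>' ! 0 \<in> X" using inX n_pos by simp
      have w: "(u ^^ p 0) ((d ^^ q 0) (\<phi>' ! 0)) \<in> X" using upow_X dpow_X x0 by simp
      have "\<phi>' ! (1 mod n) = rstar X op (eps 0) ((u ^^ p' 0) ((d ^^ q' 0) (\<phi>' ! 0))) (\<phi>' ! k 0)"
        using \<phi>'(1) n_pos unfolding pres_hom_def by auto
      also have "\<dots> = rstar X op (eps 0) (H ((u ^^ p 0) ((d ^^ q 0) (\<phi>' ! 0)))) (\<phi>' ! k 0)"
        unfolding p'0 q'0 Hrel[OF x0] ..
      also have "\<dots> = rstar X op (eps 0) (H ((u ^^ p 0) ((d ^^ q 0) (\<phi>' ! 0)))) (\<phi> ! k 0)"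
        using rot[of 0] n_pos HX[OF w] by simp
      also have "\<dots> = H (S 0 (\<phi>' ! 0))" unfolding S_def
        using good_rstar[OF goodH w inX(1)[of "k 0"]] k_range n_pos by simp
      finally show ?thesis .
    qed
    define F where "F = H \<circ> (D ^^ j)"
    have goodF: "good F" unfolding F_def by (intro good_comp goodH good_pow good_D)
    have claim: "1 \<le> i \<Longrightarrow> i \<le> n \<Longrightarrow> \<phi>' ! (i mod n) = F (\<phi> ! (i mod n))" for i
    proof (induction i)
      case 0 then show ?case by simp
    next
      case (Suc i)
      show ?case
      proof (cases "i = 0")
        case True
        have "\<phi>' ! (1 mod n) = H (S 0 ((D ^^ j) (\<phi> ! 0)))" using relphi'0 j by simp
        also have "\<dots> = H ((D ^^ j) (S 0 (\<phi> ! 0)))"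
          using Scomm[OF good_pow[OF good_D], of 0 "\<phi> ! 0" j] n_pos inX by simp
        also have "\<dots> = F (\<phi> ! (1 mod n))" using relphi[of 0] n_pos unfolding F_def by simp
        finally show ?thesis using True by simp
      next
        case False
        then have i: "1 \<le> i" "i < n" using Suc.prems by auto
        have im: "i mod n = i" using i by simp
        have IH: "\<phi>' ! i = F (\<phi> ! i)" using Suc.IH i im by simp
        have "\<phi>' ! (Suc i mod n) = S i (\<phi>' ! i)" using relphi' i by simp
        also have "\<dots> = F (S i (\<phi> ! i))" using IH Scomm[OF goodF i(2)] inX i by simp
        also have "\<dots> = F (\<phi> ! (Suc i mod n))" using relphi i by simp
        finally show ?thesis .
      qed
    qed
    have "\<phi>' ! 0 = F (\<phi> ! 0)" using claim[of n] n_pos by simp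
    then have fix0: "\<phi>' ! 0 = H (\<phi>' ! 0)" using j unfolding F_def by simp
    have x0: "\<phi>' ! 0 \<in> X" using inX n_pos by simp
    have D0: "(D ^^ (2 * N)) (\<phi>' ! 0) = \<phi>' ! 0" using DH[OF x0] fix0 by metis
    have dv: "per (\<phi>' ! 0) dvd 2 * N" using per_dvd[OF x0 D0] .
    show "\<forall>x\<in>X. (D ^^ (2 * N)) x = x"
    proof
      fix y assume y: "y \<in> X"
      have "per y = per (\<phi>' ! 0)"
        using blockX y x0 card_blk unfolding block_gl_rack_def by metis
      then obtain c where "2 * N = per y * c" using dv by (metis dvdE)
      then show "(D ^^ (2 * N)) y = y" using Dpow_mult per y by simp
    qed
  qed
  show ?thesis using part1 part2 by blast
qed

end
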